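(* Let $\mathbb{T}=\mathbb{R}/\mathbb{Z}$ with Haar probability measure $\mu$ and inner measure $\mu_*$. There exists a set $B\subset\mathbb{T}$ such that for all positive integers $m,n$, \[\sup_{F\subset B,\ F\text{ compact}}\mu(mF-nF)\neq\mu_*(mB-nB).\]
   Context: $\mu_*(S)=\sup\{\mu(K):K\subset S,\ K\text{ compact}\}$. $mB-nB=\{b_1+\dots+b_m-b_1'-\dots-b_n':b_i,b_j'\in B\}$. *)

theory Defs
  imports "HOL-Analysis.Analysis"
begin

text \<open>The torus T = R/Z, realised as the unit circle in the complex plane
 (group operation: multiplication; group inverse: inverse).  The map
 t \<mapsto> cis (2 pi t) is the quotient map R \<rightarrow> R/Z.\<close>

definition torus :: "complex set" where
  "torus = {z. cmod z = 1}"

definition haar :: "complex set \<Rightarrow> real" where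
  "haar S = measure lebesgue {t \<in> {0..<1}. cis (2 * pi * t) \<in> S}"

definition inner_haar :: "complex set \<Rightarrow> real" where
  "inner_haar S = Sup {haar K | K. K \<subseteq> S \<and> compact K}"

text \<open>mB - nB, written multiplicatively.\<close>
definition sumdiff :: "nat \<Rightarrow> nat \<Rightarrow> complex set \<Rightarrow> complex set" where
  "sumdiff m n B = {(\<Prod>i<m. b i) * (\<Prod>j<n. inverse (c j)) | b c.
      (\<forall>i<m. b i \<in> B) \<and> (\<forall>j<n. c j \<in> B)}"

end

theory Submission
  imports Defs
begin

unbundle cardinal_syntax



definition small :: "'a set \<Rightarrow> bool" where
  "small S \<longleftrightarrow> |S| <o |UNIV::real set|"

lemma small_image: "small S \<Longrightarrow> small (f ` S)"
  unfolding small_def using card_of_image ordLeq_ordLess_trans by blast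

lemma small_Un: "small S \<Longrightarrow> small T \<Longrightarrow> small (S \<union> T)"
  unfolding small_def using card_of_Un_ordLess_infinite infinite_UNIV_char_0 by blast

lemma small_finite: "finite S \<Longrightarrow> small S"
  unfolding small_def
  by (rule finite_ordLess_infinite[OF card_of_Well_order card_of_Well_order]) (auto simp: Field_card_of infinite_UNIV_char_0)

lemma small_not_cover: "|UNIV::real set| \<le>o |K| \<Longrightarrow> small S \<Longrightarrow> \<not> K \<subseteq> S"
  unfolding small_def
  by (meson card_of_mono1 not_ordLess_ordLeq ordLeq_transitive)

lemma construction:
  fixes T :: "complex set" and KK :: "complex set set"
  assumes IR: "|T \<times> KK| \<le>o |UNIV::real set|"
    and KR: "\<And>K. K \<in> KK \<Longrightarrow> |UNIV::real set| \<le>o |K|"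
    and TR: "|UNIV::real set| \<le>o |T|"
    and T0: "0 \<notin> T" and T1: "1 \<in> T" and Tmult: "\<And>x y. x \<in> T \<Longrightarrow> y \<in> T \<Longrightarrow> x * y \<in> T"
    and K0: "K0 \<in> KK"
  shows "\<exists>B \<subseteq> T. (\<forall>t\<in>T. \<exists>x. x \<in> B \<and> x * t \<in> B) \<and> (\<forall>K\<in>KK. \<exists>d\<in>K. d \<notin> B \<and> d \<noteq> 1)"
proof -
  define I where "I = T \<times> KK"
  define R where "R = |I|"
  have FR: "Field R = I" unfolding R_def by (simp add: Field_card_of)
  have CR: "Card_order R" unfolding R_def by (rule card_of_Card_order)
  have wf: "wf (R - Id)" using CR Card_order_wo_rel wo_rel.WF by blast
  have sm: "small (underS R i)" if "i \<in> I" for i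
    unfolding small_def using card_of_underS[OF CR, of i] that FR IR
    unfolding R_def I_def using ordLess_ordLeq_trans by blast
  define Dp where "Dp g i = (\<lambda>j. snd (g j)) ` underS R i" for g :: "complex \<times> complex set \<Rightarrow> complex \<times> complex" and i
  define Ap where "Ap g i = (\<lambda>j. fst (g j)) ` underS R i \<union> (\<lambda>j. fst (g j) * fst j) ` underS R i" for g :: "complex \<times> complex set \<Rightarrow> complex \<times> complex" and i
  define P where "P g i p \<longleftrightarrow> fst p \<in> T \<and> fst p \<notin> Dp g i \<and> fst p * fst i \<notin> Dp g i \<and>
      snd p \<in> snd i \<and> snd p \<notin> Ap g i \<and> snd p \<notin> {fst p, fst p * fst i, 1}" for g i p
  define F where "F g i = (SOME p. P g i p)" for g i
  define h where "h = wfrec (R - Id) F"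
  have Dp_cut: "Dp (cut g (R - Id) i) i = Dp g i" for g i
    unfolding Dp_def by (intro image_cong refl) (auto simp: underS_def cut_apply)
  have Ap_cut: "Ap (cut g (R - Id) i) i = Ap g i" for g i
    unfolding Ap_def by (intro arg_cong2[where f="(\<union>)"] image_cong refl) (auto simp: underS_def cut_apply)
  have hF: "h i = F h i" for i
    unfolding h_def F_def P_def
    by (subst wfrec[OF wf]) (simp only: Dp_cut Ap_cut flip: h_def)
  have ex: "\<exists>p. P g i p" if "i \<in> I" for g i
  proof -
    obtain t K where i: "i = (t, K)" "t \<in> T" "K \<in> KK" using \<open>i \<in> I\<close> unfolding I_def by auto
    have sD: "small (Dp g i)" unfolding Dp_def using sm[OF that] by (rule small_image)
    have "\<not> T \<subseteq> Dp g i \<union> (\<lambda>d. d / t) ` Dp g i"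
      using small_not_cover[OF TR] small_Un[OF sD small_image[OF sD]] by blast
    then obtain x where x: "x \<in> T" "x \<notin> Dp g i" "x * t \<notin> Dp g i"
    proof -
      from \<open>\<not> T \<subseteq> _\<close> obtain x where "x \<in> T" "x \<notin> Dp g i" "x \<notin> (\<lambda>d. d / t) ` Dp g i" by blast
      moreover have "x * t \<notin> Dp g i"
      proof
        assume "x * t \<in> Dp g i"
        moreover have "x = (x * t) / t" using T0 i(2) by (metis nonzero_mult_div_cancel_right)
        ultimately show False using \<open>x \<notin> (\<lambda>d. d / t) ` Dp g i\<close> by blast
      qed
      ultimately show ?thesis using that by blast
    qed
    have sA: "small (Ap g i \<union> {x, x * t, 1})" unfolding Ap_def
      using sm[OF that] by (intro small_Un small_image small_finite[of "{x, x * t, 1}"]) auto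
    then obtain d where "d \<in> K" "d \<notin> Ap g i \<union> {x, x * t, 1}"
      using small_not_cover[OF KR[OF i(3)] sA] by blast
    then show ?thesis using x i unfolding P_def by (intro exI[of _ "(x,d)"]) auto
  qed
  have hP: "P h i (h i)" if "i \<in> I" for i
    using hF[of i] someI_ex[OF ex[OF that, of h]] unfolding F_def by simp
  define B where "B = (\<Union>i\<in>I. {fst (h i), fst (h i) * fst i})"
  have tot: "(i, j) \<in> R \<or> (j, i) \<in> R" if "i \<in> I" "j \<in> I" for i j
    using CR that FR unfolding card_order_on_def well_order_on_def linear_order_on_def total_on_def
    by (metis Card_order_wo_rel CR wo_rel.TOTALS)
  have "B \<subseteq> T"
    unfolding B_def using hP Tmult unfolding P_def I_def by auto
  moreover have "\<forall>t\<in>T. \<exists>x. x \<in> B \<and> x * t \<in> B"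
  proof
    fix t assume "t \<in> T"
    then have "(t, K0) \<in> I" using K0 unfolding I_def by auto
    then show "\<exists>x. x \<in> B \<and> x * t \<in> B" unfolding B_def by (intro exI[of _ "fst (h (t, K0))"]) force
  qed
  moreover have "\<forall>K\<in>KK. \<exists>d\<in>K. d \<notin> B \<and> d \<noteq> 1"
  proof
    fix K assume "K \<in> KK"
    define i where "i = (1::complex, K)"
    have iI: "i \<in> I" using \<open>K \<in> KK\<close> T1 unfolding I_def i_def by auto
    note Pi = hP[OF iI, unfolded P_def]
    have "snd (h i) \<notin> B"
    proof
      assume "snd (h i) \<in> B"
      then obtain j where jI: "j \<in> I" and dj: "snd (h i) \<in> {fst (h j), fst (h j) * fst j}"
        unfolding B_def by blast
      note Pj = hP[OF jI, unfolded P_def]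
      consider "j = i" | "j \<in> underS R i" | "i \<in> underS R j"
        using tot[OF iI jI] unfolding underS_def by blast
      then show False
      proof cases
        case 1 then show ?thesis using Pi dj by auto
      next
        case 2 then show ?thesis using Pi dj unfolding Ap_def by auto
      next
        case 3
        then have "snd (h i) \<in> Dp h j" unfolding Dp_def by blast
        then show ?thesis using Pj dj by auto
      qed
    qed
    then show "\<exists>d\<in>K. d \<notin> B \<and> d \<noteq> 1" using Pi unfolding i_def by auto
  qed
  ultimately show ?thesis by blast
qed



lemma uncountable_closed_lepoll:
  fixes P :: "complex set"
  assumes "closed P" "uncountable P"
  shows "|UNIV::real set| \<le>o |P|"
proof -
  obtain Bs :: "nat \<Rightarrow> complex set" where "inj Bs" and Bo: "\<And>n. open (Bs n)"
    and Bu: "\<And>S. open S \<Longrightarrow> \<exists>k. S = \<Union>{Bs n |n. n \<in> k}"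
    by (rule univ_second_countable_sequence) blast
  define N where "N = {n. countable (Bs n \<inter> P)}"
  define C where "C = P - \<Union>(Bs ` N)"
  have "P - C \<subseteq> (\<Union>n\<in>N. Bs n \<inter> P)" unfolding C_def by auto
  moreover have "countable (\<Union>n\<in>N. Bs n \<inter> P)"
    by (rule countable_UN) (auto simp: N_def)
  ultimately have cPC: "countable (P - C)" using countable_subset by blast
  have "closed C" unfolding C_def using assms(1) Bo by (intro closed_Diff open_UN) (auto simp del: UN_simps)
  have "C \<noteq> {}"
  proof
    assume "C = {}"
    then have "P = P - C" by simp
    then show False using cPC assms(2) by simp
  qed
  have perf: "\<exists>y. y \<noteq> x \<and> y \<in> C \<and> y \<in> T" if "x \<in> C" "x \<in> T" "open T" for x T
  proof -
    obtain k where k: "T = \<Union>{Bs n |n. n \<in> k}" using Bu[OF \<open>open T\<close>] by blast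
    then obtain n where n: "n \<in> k" "x \<in> Bs n" using \<open>x \<in> T\<close> by auto
    have "n \<notin> N" using that(1) n unfolding C_def by auto
    then have "uncountable (Bs n \<inter> P)" unfolding N_def by auto
    moreover have "countable (Bs n \<inter> P)" if "countable (Bs n \<inter> P - (insert x (P - C)))"
    proof (rule countable_subset)
      show "Bs n \<inter> P \<subseteq> (Bs n \<inter> P - (insert x (P - C))) \<union> insert x (P - C)" by blast
      show "countable ((Bs n \<inter> P - (insert x (P - C))) \<union> insert x (P - C))"
        using that cPC by simp
    qed
    ultimately have "uncountable (Bs n \<inter> P - (insert x (P - C)))" by blast
    then have "Bs n \<inter> P - (insert x (P - C)) \<noteq> {}" by (metis countable_empty)
    then obtain y where "y \<in> Bs n \<inter> P - (insert x (P - C))"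
      by blast
    then show ?thesis using k n by auto
  qed
  have "euclidean derived_set_of C = C"
  proof
    show "euclidean derived_set_of C \<subseteq> C"
    proof
      fix x assume "x \<in> euclidean derived_set_of C"
      then have "x islimpt C" unfolding islimpt_def in_derived_set_of open_openin[symmetric] by blast
      then show "x \<in> C" using \<open>closed C\<close> closed_limpt by blast
    qed
    show "C \<subseteq> euclidean derived_set_of C"
    proof
      fix x assume "x \<in> C"
      show "x \<in> euclidean derived_set_of C"
        unfolding in_derived_set_of topspace_euclidean
      proof (intro conjI allI impI UNIV_I)
        fix T assume "x \<in> T \<and> openin euclidean T"
        then show "\<exists>y. y \<noteq> x \<and> y \<in> C \<and> y \<in> T" using perf[of x T] \<open>x \<in> C\<close> open_openin[symmetric] by blast
      qed
    qed
  qed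
  then have "(UNIV::real set) \<lesssim> C"
    by (rule lepoll_perfect_set[OF disjI1[OF completely_metrizable_space_euclidean]]) (rule \<open>C \<noteq> {}\<close>)
  moreover have "C \<subseteq> P" unfolding C_def by auto
  ultimately have "(UNIV::real set) \<lesssim> P"
    using lepoll_trans subset_imp_lepoll by blast
  then show ?thesis unfolding lepoll_def card_of_ordLeq .
qed

lemma closed_sets_code_inj:
  obtains code :: "complex set \<Rightarrow> nat set" where "inj_on code {K. closed K}"
proof -
  obtain Bs :: "nat \<Rightarrow> complex set" where "inj Bs" and Bo: "\<And>n. open (Bs n)"
    and Bu: "\<And>S. open S \<Longrightarrow> \<exists>k. S = \<Union>{Bs n |n. n \<in> k}"
    by (rule univ_second_countable_sequence) blast
  define code where "code K = {n. Bs n \<inter> K = {}}" for K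
  have eq: "K = - (\<Union>n\<in>code K. Bs n)" if cK: "closed K" for K
  proof -
    obtain k where k: "- K = \<Union>{Bs n |n. n \<in> k}" using Bu[of "-K"] cK by (auto simp: open_Compl)
    have "- K = (\<Union>n\<in>code K. Bs n)"
    proof
      show "- K \<subseteq> (\<Union>n\<in>code K. Bs n)"
      proof
        fix x assume "x \<in> - K"
        then obtain n where "n \<in> k" "x \<in> Bs n" using k by auto
        moreover have "Bs n \<inter> K = {}" using k \<open>n \<in> k\<close> by auto
        ultimately show "x \<in> (\<Union>n\<in>code K. Bs n)" unfolding code_def by auto
      qed
      show "(\<Union>n\<in>code K. Bs n) \<subseteq> - K" unfolding code_def by auto
    qed
    then show ?thesis by auto
  qed
  have "inj_on code {K. closed K}"
    by (rule inj_onI) (metis eq mem_Collect_eq)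
  then show ?thesis using that by blast
qed

lemma card_pairs:
  fixes KK :: "complex set set"
  assumes "\<And>K. K \<in> KK \<Longrightarrow> closed K"
  shows "|(T::complex set) \<times> KK| \<le>o |UNIV::real set|"
proof -
  obtain code :: "complex set \<Rightarrow> nat set" where ci: "inj_on code {K. closed K}"
    using closed_sets_code_inj by blast
  obtain g :: "nat set \<Rightarrow> real" where g: "bij_betw g UNIV UNIV"
    using nat_sets_eqpoll_reals unfolding eqpoll_def by blast
  define f where "f = (\<lambda>(z::complex, K). ((Re z, Im z), g (code K)))"
  have "inj_on f (T \<times> KK)"
  proof (rule inj_onI)
    fix a b assume "a \<in> T \<times> KK" "b \<in> T \<times> KK" "f a = f b"
    then obtain z K z' K' where ab: "a = (z, K)" "b = (z', K')" "K \<in> KK" "K' \<in> KK" by auto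
    with \<open>f a = f b\<close> have "Re z = Re z'" "Im z = Im z'" "g (code K) = g (code K')" unfolding f_def by auto
    then have "z = z'" "code K = code K'" using g complex_eqI by (auto simp: bij_betw_def inj_def)
    then have "K = K'" using ci ab assms by (auto simp: inj_on_def)
    then show "a = b" using ab \<open>z = z'\<close> by simp
  qed
  then have "|T \<times> KK| \<le>o |(UNIV::real set) \<times> (UNIV::real set) \<times> (UNIV::real set)|"
    unfolding card_of_ordLeq[symmetric] by (intro exI[of _ "\<lambda>x. case f x of ((a,b),c) \<Rightarrow> (a,b,c)"]) 
      (auto simp: inj_on_def f_def split: prod.splits)
  also have "|(UNIV::real set) \<times> (UNIV::real set) \<times> (UNIV::real set)| \<le>o |(UNIV::real set) \<times> (UNIV::real set)|"
    by (intro card_of_Times_mono2 ordIso_iff_ordLeq[THEN iffD1, THEN conjunct1] card_of_Times_same_infinite infinite_UNIV_char_0)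
  also have "|(UNIV::real set) \<times> (UNIV::real set)| \<le>o |UNIV::real set|"
    by (intro ordIso_iff_ordLeq[THEN iffD1, THEN conjunct1] card_of_Times_same_infinite infinite_UNIV_char_0)
  finally show ?thesis .
qed


lemma Ico_lm: "{0..<(1::real)} \<in> lmeasurable"
  by (rule bounded_set_imp_lmeasurable) auto

lemma cis_inj01:
  assumes "t \<in> {0..<1}" "s \<in> {0..<1}" "cis (2 * pi * t) = cis (2 * pi * s)"
  shows "t = s"
proof -
  have "cis (2 * pi * t - 2 * pi * s) = 1"
    using assms(3) cis_divide[of "2 * pi * t" "2 * pi * s"] by simp
  then have "exp (\<i> * complex_of_real (2 * pi * t - 2 * pi * s)) = 1" by (simp add: cis_conv_exp)
  then obtain n :: int where "2 * pi * t - 2 * pi * s = real_of_int (2 * n) * pi"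
    unfolding exp_eq_1 by auto
  then have "2 * pi * (t - s - real_of_int n) = 0" by (simp add: algebra_simps)
  then have "t - s = real_of_int n" by simp
  moreover have "\<bar>t - s\<bar> < 1" using assms(1,2) by auto
  ultimately have "n = 0" by linarith
  then show ?thesis using \<open>t - s = real_of_int n\<close> by simp
qed

lemma haar_countable:
  assumes "countable S"
  shows "haar S = 0"
proof -
  define Q where "Q = {t \<in> {0..<1}. cis (2 * pi * t) \<in> S}"
  have "inj_on (\<lambda>t. cis (2 * pi * t)) Q"
    by (rule inj_onI) (use cis_inj01 in \<open>auto simp: Q_def\<close>)
  moreover have "countable ((\<lambda>t. cis (2 * pi * t)) ` Q)"
    by (rule countable_subset[OF _ assms]) (unfold Q_def, blast)
  ultimately have "countable Q" using countable_image_inj_on by blast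
  then have "Q \<in> null_sets lebesgue"
    by (intro null_sets_completionI countable_imp_null_set_lborel)
  then show ?thesis unfolding haar_def Q_def[symmetric] by (rule measure_eq_0_null_sets)
qed

lemma haar_le1: "haar S \<le> 1"
proof -
  define Q where "Q = {t \<in> {0..<1}. cis (2 * pi * t) \<in> S}"
  show ?thesis
  proof (cases "Q \<in> sets lebesgue")
    case True
    then have "measure lebesgue Q \<le> measure lebesgue {0..<(1::real)}"
      by (intro measure_mono_fmeasurable Ico_lm) (auto simp: Q_def)
    then show ?thesis unfolding haar_def Q_def[symmetric] by simp
  next
    case False
    then show ?thesis unfolding haar_def Q_def[symmetric] by (simp add: measure_notin_sets)
  qed
qed

lemma haar_torus: "haar torus = 1"
proof -
  have "{t \<in> {0..<1}. cis (2 * pi * t) \<in> torus} = {0..<(1::real)}"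
    by (auto simp: torus_def)
  then show ?thesis unfolding haar_def by simp
qed

lemma countable_sumdiff:
  assumes "countable F"
  shows "countable (sumdiff m n F)"
proof -
  define f where "f = (\<lambda>(b :: nat \<Rightarrow> complex, c :: nat \<Rightarrow> complex). (\<Prod>i<m. b i) * (\<Prod>j<n. inverse (c j)))"
  have "sumdiff m n F \<subseteq> f ` (PiE {..<m} (\<lambda>_. F) \<times> PiE {..<n} (\<lambda>_. F))"
  proof
    fix z assume "z \<in> sumdiff m n F"
    then have "\<exists>b c. z = (\<Prod>i<m. b i) * (\<Prod>j<n. inverse (c j)) \<and> (\<forall>i<m. b i \<in> F) \<and> (\<forall>j<n. c j \<in> F)"
      unfolding sumdiff_def by simp
    then obtain b c where z: "z = (\<Prod>i<m. b i) * (\<Prod>j<n. inverse (c j))"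
      and b: "\<forall>i<m. b i \<in> F" and c: "\<forall>j<n. c j \<in> F"
      by blast
    have e1: "(\<Prod>i<m. restrict b {..<m} i) = (\<Prod>i<m. b i)"
      by (rule prod.cong) auto
    have e2: "(\<Prod>j<n. inverse (restrict c {..<n} j)) = (\<Prod>j<n. inverse (c j))"
      by (rule prod.cong) auto
    have "z = f (restrict b {..<m}, restrict c {..<n})"
      unfolding z f_def using e1 e2 by simp
    moreover have "restrict b {..<m} \<in> PiE {..<m} (\<lambda>_. F)"
      using b by (simp add: restrict_PiE_iff)
    moreover have "restrict c {..<n} \<in> PiE {..<n} (\<lambda>_. F)"
      using c by (simp add: restrict_PiE_iff)
    ultimately show "z \<in> f ` (PiE {..<m} (\<lambda>_. F) \<times> PiE {..<n} (\<lambda>_. F))" by blast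
  qed
  moreover have "countable (PiE {..<m} (\<lambda>_. F) \<times> PiE {..<n} (\<lambda>_. F))"
    using assms by (intro countable_SIGMA countable_PiE finite_lessThan)
  ultimately show ?thesis by (rule countable_subset[OF _ countable_image])
qed

lemma torus_sub_sumdiff:
  assumes "0 < m" "0 < n" "1 \<in> B" "B \<subseteq> torus" "\<And>t. t \<in> torus \<Longrightarrow> \<exists>x. x \<in> B \<and> x * t \<in> B"
  shows "torus \<subseteq> sumdiff m n B"
proof
  fix t assume "t \<in> torus"
  then obtain x where x: "x \<in> B" "x * t \<in> B" using assms(5) by blast
  then have "x \<noteq> 0" using assms(4) by (auto simp: torus_def)
  obtain m' where m': "m = Suc m'" using assms(1) gr0_conv_Suc by blast
  obtain n' where n': "n = Suc n'" using assms(2) gr0_conv_Suc by blast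
  define b where "b i = (if i = 0 then x * t else 1)" for i :: nat
  define c where "c j = (if j = 0 then x else 1)" for j :: nat
  have "(\<Prod>i<m. b i) = x * t" unfolding m' prod.lessThan_Suc_shift by (simp add: b_def)
  moreover have "(\<Prod>j<n. inverse (c j)) = inverse x" unfolding n' prod.lessThan_Suc_shift by (simp add: c_def)
  ultimately have "t = (\<Prod>i<m. b i) * (\<Prod>j<n. inverse (c j))" using \<open>x \<noteq> 0\<close> by (simp add: field_simps)
  moreover have "\<forall>i<m. b i \<in> B" "\<forall>j<n. c j \<in> B" using x assms(3) by (auto simp: b_def c_def)
  ultimately show "t \<in> sumdiff m n B" unfolding sumdiff_def by blast
qed


theorem proposition5p4:
  shows "\<exists>B \<subseteq> torus. \<forall>m n :: nat. 0 < m \<longrightarrow> 0 < n \<longrightarrow>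
           Sup {haar (sumdiff m n F) | F. F \<subseteq> B \<and> compact F}
             \<noteq> inner_haar (sumdiff m n B)"
proof -
  define KK where "KK = {K. compact K \<and> K \<subseteq> torus \<and> uncountable K}"
  have tsph: "torus = sphere 0 1" by (simp add: torus_def sphere_def dist_norm)
  have ctor: "compact torus" unfolding tsph by (rule compact_sphere)
  have t0: "0 \<notin> torus" by (simp add: torus_def)
  have t1: "1 \<in> torus" by (simp add: torus_def)
  have tm: "x * y \<in> torus" if "x \<in> torus" "y \<in> torus" for x y
    using that by (simp add: torus_def norm_mult)
  have "uncountable torus"
  proof (rule connected_uncountable)
    show "connected torus" unfolding tsph by (rule connected_sphere) simp
    show "1 \<in> torus" by (rule t1)
    show "-1 \<in> torus" by (simp add: torus_def)
  qed simp
  then have tK: "torus \<in> KK" unfolding KK_def using ctor by blast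
  have IR: "|torus \<times> KK| \<le>o |UNIV::real set|"
    by (rule card_pairs) (auto simp: KK_def compact_imp_closed)
  have KR: "|UNIV::real set| \<le>o |K|" if "K \<in> KK" for K
    using that unfolding KK_def by (intro uncountable_closed_lepoll) (auto simp: compact_imp_closed)
  obtain B0 where B0: "B0 \<subseteq> torus" "\<forall>t\<in>torus. \<exists>x. x \<in> B0 \<and> x * t \<in> B0"
    "\<forall>K\<in>KK. \<exists>d\<in>K. d \<notin> B0 \<and> d \<noteq> 1"
    using construction[OF IR KR KR[OF tK] t0 t1 tm tK] by blast
  define B where "B = insert 1 B0"
  have Bt: "B \<subseteq> torus" using B0(1) t1 unfolding B_def by blast
  have cnt: "countable F" if "F \<subseteq> B" "compact F" for F
  proof (rule ccontr)
    assume "uncountable F"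
    have "F \<subseteq> torus" using that(1) Bt by (rule order_trans)
    then have "F \<in> KK" unfolding KK_def using that(2) \<open>uncountable F\<close> by simp
    then obtain d where "d \<in> F" "d \<notin> B0" "d \<noteq> 1" using B0(3) by blast
    then show False using that(1) unfolding B_def by blast
  qed
  have "Sup {haar (sumdiff m n F) | F. F \<subseteq> B \<and> compact F} \<noteq> inner_haar (sumdiff m n B)"
    if "0 < m" "0 < n" for m n
  proof -
    have "{haar (sumdiff m n F) | F. F \<subseteq> B \<and> compact F} = {0}"
    proof
      show "{haar (sumdiff m n F) | F. F \<subseteq> B \<and> compact F} \<subseteq> {0}"
      proof
        fix x assume "x \<in> {haar (sumdiff m n F) | F. F \<subseteq> B \<and> compact F}"
        then have "\<exists>F. x = haar (sumdiff m n F) \<and> F \<subseteq> B \<and> compact F" by simp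
        then obtain F where F: "x = haar (sumdiff m n F)" "F \<subseteq> B" "compact F" by blast
        have "x = 0" unfolding F(1) by (rule haar_countable[OF countable_sumdiff[OF cnt[OF F(2,3)]]])
        then show "x \<in> {0}" by simp
      qed
      have "haar (sumdiff m n {}) = 0" by (rule haar_countable[OF countable_sumdiff]) simp
      then have "\<exists>F. 0 = haar (sumdiff m n F) \<and> F \<subseteq> B \<and> compact F"
        by (intro exI[of _ "{}"]) simp
      then have "0 \<in> {haar (sumdiff m n F) | F. F \<subseteq> B \<and> compact F}" by simp
      then show "{0} \<subseteq> {haar (sumdiff m n F) | F. F \<subseteq> B \<and> compact F}" by simp
    qed
    then have L: "Sup {haar (sumdiff m n F) | F. F \<subseteq> B \<and> compact F} = 0" by simp
    have "torus \<subseteq> sumdiff m n B"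
      by (rule torus_sub_sumdiff[OF that]) (use B0 Bt in \<open>auto simp: B_def\<close>)
    then have "haar torus \<in> {haar K | K. K \<subseteq> sumdiff m n B \<and> compact K}"
      using ctor by blast
    moreover have "bdd_above {haar K | K. K \<subseteq> sumdiff m n B \<and> compact K}"
      by (rule bdd_aboveI[of _ 1]) (use haar_le1 in blast)
    ultimately have "haar torus \<le> inner_haar (sumdiff m n B)"
      unfolding inner_haar_def by (rule cSup_upper)
    then have "1 \<le> inner_haar (sumdiff m n B)" by (simp add: haar_torus)
    then show ?thesis using L by simp
  qed
  then show ?thesis using Bt by blast
qed

end
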